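(* Let $L/K$ be a Galois extension of number fields and let $A/L$ be an isotypic abelian variety (isogenous to $B^n$ for a simple $B$) which is a $K$-variety. Let $D=\End(A_L)\otimes_{\mathbb{Z}}\mathbb{Q}$ with center the field $E$, let $\psi:\Gal(L/K)\to\Aut(E)$ be the group homomorphism given by the action $\sigma.\varphi=\mu_\sigma\,{}^\sigma\varphi\,\mu_\sigma^{-1}$, let $G_0=\ker\psi$ and let $E_0\subseteq E$ be the subfield fixed by this action of $\Gal(L/K)$. Then $E/E_0$ is Galois, $G_0$ is a normal subgroup of $\Gal(L/K)$, and there is an isomorphism $\Gal(L/K)/G_0\simeq\Gal(E/E_0)$. Moreover, this isomorphism induces an order-reversing bijection between subgroups $H$ of $\Gal(L/K)$ containing $G_0$ and subextensions of $E/E_0$, given by $H\mapsto E^H=\{\varphi\in E:\ \mu_\sigma\,{}^\sigma\varphi=\varphi\,\mu_\sigma\ \forall\sigma\in H\}$.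
   Context: $A/L$ is a $K$-variety if for each $\sigma\in\Gal(L/K)$ there is an isogeny $\mu_\sigma:{}^\sigma A\to A$ from the Galois conjugate ${}^\sigma A$; ${}^\sigma\varphi$ is the morphism obtained by applying $\sigma$ to the coefficients of $\varphi$, and $\mu_\sigma^{-1}$ is the inverse in $\mathrm{Hom}(A,{}^\sigma A)\otimes\mathbb{Q}$. The element $\mu_\sigma\,{}^\sigma\varphi\,\mu_\sigma^{-1}$ lies in $E$ for $\varphi\in E$, is independent of the choice of $\mu_\sigma$, and $(\sigma,\varphi)\mapsto\mu_\sigma\,{}^\sigma\varphi\,\mu_\sigma^{-1}$ is an action of $\Gal(L/K)$ on $E$ by field automorphisms. *)

theory Defs
  imports "HOL-Algebra.Algebra"
begin

definition aut_group :: "('e, 'm) ring_scheme \<Rightarrow> ('e \<Rightarrow> 'e) monoid" where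
  "aut_group E = \<lparr> carrier = {f. f \<in> ring_iso E E \<and> f \<in> extensional (carrier E)},
                   Group.monoid.mult = (\<lambda>f g. compose (carrier E) f g),
                   Group.monoid.one = restrict id (carrier E) \<rparr>"

definition gal_group :: "('e, 'm) ring_scheme \<Rightarrow> 'e set \<Rightarrow> ('e \<Rightarrow> 'e) monoid" where
  "gal_group E F = (aut_group E) \<lparr> carrier := {f \<in> carrier (aut_group E). \<forall>x\<in>F. f x = x} \<rparr>"

text \<open>Galois extension (finite case, Dummit--Foote definition): F is a subfield of E,
  E has finite degree over F, and |Aut(E/F)| = [E:F].\<close>
definition galois_ext :: "('e, 'm) ring_scheme \<Rightarrow> 'e set \<Rightarrow> bool" where
  "galois_ext E F \<longleftrightarrow> subfield F E \<and> ring.finite_dimension E F (carrier E)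
     \<and> card (carrier (gal_group E F)) = ring.dim E F (carrier E)"

text \<open>Number field: field of characteristic 0, finite-dimensional over its prime field.\<close>
definition number_field :: "('e, 'm) ring_scheme \<Rightarrow> bool" where
  "number_field E \<longleftrightarrow> field E \<and> (\<forall>n::nat. n > 0 \<longrightarrow> [n] \<cdot>\<^bsub>E\<^esub> \<one>\<^bsub>E\<^esub> \<noteq> \<zero>\<^bsub>E\<^esub>)
     \<and> ring.finite_dimension E (generate_field E {}) (carrier E)"

definition fixed_field :: "('e, 'm) ring_scheme \<Rightarrow> ('g \<Rightarrow> 'e \<Rightarrow> 'e) \<Rightarrow> 'g set \<Rightarrow> 'e set" where
  "fixed_field E psi H = {x \<in> carrier E. \<forall>\<sigma>\<in>H. psi \<sigma> x = x}"

end

theory Submission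
  imports Defs
begin

context field
begin

lemma minus_plus_cancel: "a \<in> carrier R \<Longrightarrow> b \<in> carrier R \<Longrightarrow> a = (a \<ominus> b) \<oplus> b"
  by algebra

lemma finsum_diff:
  assumes "finite A" "f \<in> A \<rightarrow> carrier R" "g \<in> A \<rightarrow> carrier R"
  shows "(\<Oplus>i\<in>A. f i \<ominus> g i) = (\<Oplus>i\<in>A. f i) \<ominus> (\<Oplus>i\<in>A. g i)"
  using assms
proof (induct A rule: finite_induct)
  case empty then show ?case by (simp add: a_minus_def)
next
  case (insert x F)
  have f: "f \<in> F \<rightarrow> carrier R" "f x \<in> carrier R" and g: "g \<in> F \<rightarrow> carrier R" "g x \<in> carrier R"
    using insert by auto
  have cl: "(\<lambda>i. f i \<ominus> g i) \<in> F \<rightarrow> carrier R" using f g by auto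
  have "(\<Oplus>i\<in>insert x F. f i \<ominus> g i) = (f x \<ominus> g x) \<oplus> (\<Oplus>i\<in>F. f i \<ominus> g i)"
    using insert cl f g by (subst finsum_insert) auto
  also have "\<dots> = (f x \<ominus> g x) \<oplus> ((\<Oplus>i\<in>F. f i) \<ominus> (\<Oplus>i\<in>F. g i))"
    using insert f g by simp
  also have "\<dots> = (f x \<oplus> (\<Oplus>i\<in>F. f i)) \<ominus> (g x \<oplus> (\<Oplus>i\<in>F. g i))"
    using f g finsum_closed[OF f(1)] finsum_closed[OF g(1)] by algebra
  also have "\<dots> = (\<Oplus>i\<in>insert x F. f i) \<ominus> (\<Oplus>i\<in>insert x F. g i)"
    using insert f g by (simp add: finsum_insert)
  finally show ?case .
qed

lemma linsys:
  assumes "finite I" "finite J" "card I < card J" "\<And>j i. j \<in> J \<Longrightarrow> i \<in> I \<Longrightarrow> f j i \<in> carrier R"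
  shows "\<exists>c. c \<in> J \<rightarrow> carrier R \<and> (\<exists>j\<in>J. c j \<noteq> \<zero>) \<and> (\<forall>i\<in>I. (\<Oplus>j\<in>J. c j \<otimes> f j i) = \<zero>)"
  using assms
proof (induct I arbitrary: J f rule: finite_induct)
  case empty
  then have "J \<noteq> {}" by auto
  then obtain j0 where j0: "j0 \<in> J" by blast
  show ?case
    by (rule exI[of _ "\<lambda>j. if j = j0 then \<one> else \<zero>"]) (use j0 in auto)
next
  case (insert i0 I)
  note fin = insert(1) and notin = insert(2) and IH = insert(3)
  have cardI: "card (insert i0 I) = Suc (card I)" using fin notin by simp
  show ?case
  proof (cases "\<forall>j\<in>J. f j i0 = \<zero>")
    case True
    obtain c where c: "c \<in> J \<rightarrow> carrier R" "\<exists>j\<in>J. c j \<noteq> \<zero>" "\<forall>i\<in>I. (\<Oplus>j\<in>J. c j \<otimes> f j i) = \<zero>"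
      using IH[of J f, OF insert(4)] insert(5,6) cardI by auto
    have "(\<Oplus>j\<in>J. c j \<otimes> f j i0) = \<zero>"
    proof -
      have "(\<Oplus>j\<in>J. c j \<otimes> f j i0) = (\<Oplus>j\<in>J. \<zero>)"
        using True c(1) by (intro finsum_cong') (auto simp: Pi_iff)
      then show ?thesis by simp
    qed
    then show ?thesis using c by auto
  next
    case False
    then obtain k where k: "k \<in> J" "f k i0 \<noteq> \<zero>" by auto
    have fk: "f k i0 \<in> carrier R" using k insert(6) by auto
    define p where "p = inv (f k i0)"
    have p: "p \<in> carrier R" "p \<otimes> f k i0 = \<one>" using fk k(2) unfolding p_def
      by (auto simp add: field_Units)
    define J' where "J' = J - {k}"
    define g where "g = (\<lambda>j i. f j i \<ominus> (f j i0 \<otimes> p) \<otimes> f k i)"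
    have finJ': "finite J'" using insert(4) J'_def by simp
    have cardJ': "card I < card J'" using insert(5) cardI k(1) insert(4) unfolding J'_def
      by (simp add: card_Diff_singleton)
    have gc: "g j i \<in> carrier R" if "j \<in> J'" "i \<in> I" for j i
      using that insert(6) p k(1) unfolding g_def J'_def by (auto intro!: minus_closed)
    obtain c' where c': "c' \<in> J' \<rightarrow> carrier R" "\<exists>j\<in>J'. c' j \<noteq> \<zero>"
        "\<forall>i\<in>I. (\<Oplus>j\<in>J'. c' j \<otimes> g j i) = \<zero>"
      using IH[of J' g, OF finJ' cardJ' gc] by blast
    define S0 where "S0 = (\<Oplus>j\<in>J'. c' j \<otimes> f j i0)"
    have fJ': "f j i \<in> carrier R" if "j \<in> J'" "i \<in> insert i0 I" for j i
      using that insert(6) unfolding J'_def by auto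
    have fJ0: "f j i0 \<in> carrier R" if "j \<in> J'" for j using fJ' that by simp
    have fJI: "f j i \<in> carrier R" if "j \<in> J'" "i \<in> I" for j i using fJ' that by simp
    have S0: "S0 \<in> carrier R" unfolding S0_def using c'(1) fJ0 fJI fJ' by (intro finsum_closed) auto
    define c where "c = (\<lambda>j. if j = k then \<ominus> S0 \<otimes> p else c' j)"
    have c1: "c \<in> J \<rightarrow> carrier R" using c'(1) S0 p unfolding c_def J'_def by auto
    have c2: "\<exists>j\<in>J. c j \<noteq> \<zero>" using c'(2) unfolding c_def J'_def by auto
    have J: "J = insert k J'" "k \<notin> J'" using k(1) unfolding J'_def by auto
    have split: "(\<Oplus>j\<in>J. c j \<otimes> f j i) = (\<ominus> S0 \<otimes> p) \<otimes> f k i \<oplus> (\<Oplus>j\<in>J'. c' j \<otimes> f j i)"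
      if "i \<in> insert i0 I" for i
    proof -
      have "(\<Oplus>j\<in>J. c j \<otimes> f j i) = c k \<otimes> f k i \<oplus> (\<Oplus>j\<in>J'. c j \<otimes> f j i)"
        unfolding J(1) using J(2) finJ' c1 fJ0 fJI fJ' that insert(6) k(1) J
        by (subst finsum_insert) (auto simp: Pi_def)
      also have "(\<Oplus>j\<in>J'. c j \<otimes> f j i) = (\<Oplus>j\<in>J'. c' j \<otimes> f j i)"
        using J(2) c'(1) fJ0 fJI fJ' that by (intro finsum_cong') (auto simp: c_def Pi_def)
      finally show ?thesis by (simp add: c_def)
    qed
    have "\<forall>i\<in>insert i0 I. (\<Oplus>j\<in>J. c j \<otimes> f j i) = \<zero>"
    proof
      fix i assume i: "i \<in> insert i0 I"
      have fki: "f k i \<in> carrier R" using i k insert(6) by auto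
      show "(\<Oplus>j\<in>J. c j \<otimes> f j i) = \<zero>"
      proof (cases "i = i0")
        case True
        have "(\<ominus> S0 \<otimes> p) \<otimes> f k i0 \<oplus> S0 = \<ominus> S0 \<otimes> (p \<otimes> f k i0) \<oplus> S0"
          using S0 p fk by algebra
        also have "\<dots> = \<zero>" using p S0 by algebra
        finally show ?thesis using split[OF i] True S0_def by simp
      next
        case False
        then have iI: "i \<in> I" using i by auto
        have e1: "(\<Oplus>j\<in>J'. c' j \<otimes> g j i) =
             (\<Oplus>j\<in>J'. c' j \<otimes> f j i) \<ominus> (\<Oplus>j\<in>J'. (c' j \<otimes> f j i0) \<otimes> (p \<otimes> f k i))"
        proof -
          have "(\<Oplus>j\<in>J'. c' j \<otimes> g j i) = (\<Oplus>j\<in>J'. c' j \<otimes> f j i \<ominus> (c' j \<otimes> f j i0) \<otimes> (p \<otimes> f k i))"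
          proof (intro finsum_cong')
            fix j assume j: "j \<in> J'"
            have "c' j \<in> carrier R" "f j i \<in> carrier R" "f j i0 \<in> carrier R"
              using j c'(1) fJ0 fJI iI by auto
            then show "c' j \<otimes> g j i = c' j \<otimes> f j i \<ominus> (c' j \<otimes> f j i0) \<otimes> (p \<otimes> f k i)"
              unfolding g_def using p fki by algebra
          qed (use c'(1) fJ0 fJI iI p fki in \<open>auto intro!: minus_closed\<close>)
          also have "\<dots> = (\<Oplus>j\<in>J'. c' j \<otimes> f j i) \<ominus> (\<Oplus>j\<in>J'. (c' j \<otimes> f j i0) \<otimes> (p \<otimes> f k i))"
            using c'(1) fJ0 fJI iI p fki finJ' by (intro finsum_diff) auto
          finally show ?thesis .
        qed
        have e2: "(\<Oplus>j\<in>J'. (c' j \<otimes> f j i0) \<otimes> (p \<otimes> f k i)) = S0 \<otimes> (p \<otimes> f k i)"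
          unfolding S0_def using c'(1) fJ0 fJI iI p fki finJ' by (subst finsum_ldistr) auto
        have T: "(\<Oplus>j\<in>J'. c' j \<otimes> f j i) \<in> carrier R"
          using c'(1) fJ0 fJI iI by (intro finsum_closed) auto
        have "(\<Oplus>j\<in>J'. c' j \<otimes> f j i) \<ominus> S0 \<otimes> (p \<otimes> f k i) = \<zero>"
          using c'(3) iI e1 e2 by simp
        then have "(\<Oplus>j\<in>J'. c' j \<otimes> f j i) = S0 \<otimes> (p \<otimes> f k i)"
        proof -
          have X: "S0 \<otimes> (p \<otimes> f k i) \<in> carrier R" using S0 p fki by simp
          have "(\<Oplus>j\<in>J'. c' j \<otimes> f j i) = ((\<Oplus>j\<in>J'. c' j \<otimes> f j i) \<ominus> S0 \<otimes> (p \<otimes> f k i)) \<oplus> S0 \<otimes> (p \<otimes> f k i)"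
            using T X by (rule minus_plus_cancel)
          also have "\<dots> = S0 \<otimes> (p \<otimes> f k i)" using X \<open>(\<Oplus>j\<in>J'. c' j \<otimes> f j i) \<ominus> S0 \<otimes> (p \<otimes> f k i) = \<zero>\<close> by simp
          finally show ?thesis .
        qed
        moreover have "(\<ominus> S0 \<otimes> p) \<otimes> f k i \<oplus> S0 \<otimes> (p \<otimes> f k i) = \<zero>"
          using S0 p fki by algebra
        ultimately show ?thesis using split[OF i] by simp
      qed
    qed
    then show ?thesis using c1 c2 by blast
  qed
qed

end

context field
begin

lemma endo_zero: "s \<in> ring_hom R R \<Longrightarrow> s \<zero> = \<zero>"
  using ring_hom_zero[of s R R] ring_axioms by simp

lemma endo_neg: assumes "s \<in> ring_hom R R" "x \<in> carrier R" shows "s (\<ominus> x) = \<ominus> s x"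
proof -
  have "s (\<ominus> x) \<oplus> s x = \<zero>"
    using assms ring_hom_add[of s R R "\<ominus> x" x] endo_zero[OF assms(1)] by (simp add: l_neg)
  then show ?thesis using assms ring_hom_closed[OF assms(1)]
    by (metis add.inv_closed minus_equality)
qed

lemma endo_minus: assumes "s \<in> ring_hom R R" "x \<in> carrier R" "y \<in> carrier R"
  shows "s (x \<ominus> y) = s x \<ominus> s y"
  using assms endo_neg ring_hom_add[of s R R] by (simp add: a_minus_def)

lemma endo_finsum: assumes "s \<in> ring_hom R R" "f \<in> A \<rightarrow> carrier R"
  shows "s (\<Oplus>i\<in>A. f i) = (\<Oplus>i\<in>A. s (f i))"
  using assms(2)
proof (induct A rule: infinite_finite_induct)
  case (infinite A) then show ?case using endo_zero[OF assms(1)] by simp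
next
  case empty then show ?case using endo_zero[OF assms(1)] by simp
next
  case (insert x F)
  then have f: "f \<in> F \<rightarrow> carrier R" "f x \<in> carrier R" by auto
  have s: "(\<lambda>i. s (f i)) \<in> F \<rightarrow> carrier R" "s (f x) \<in> carrier R"
    using f ring_hom_closed[OF assms(1)] by auto
  show ?case using insert f s ring_hom_add[OF assms(1) f(2) finsum_closed[OF f(1)]]
    by (simp add: finsum_insert)
qed

lemma combine_finsum:
  "length Ks = length Us \<Longrightarrow> set Ks \<subseteq> carrier R \<Longrightarrow> set Us \<subseteq> carrier R \<Longrightarrow>
   combine Ks Us = (\<Oplus>j\<in>{..<length Us}. Ks ! j \<otimes> Us ! j)"
proof (induct Us arbitrary: Ks)
  case Nil then show ?case by simp
next
  case (Cons u Us)
  then obtain k Ks' where Ks: "Ks = k # Ks'" by (cases Ks) auto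
  have h: "length Ks' = length Us" "set Ks' \<subseteq> carrier R" "set Us \<subseteq> carrier R" "k \<in> carrier R" "u \<in> carrier R"
    using Cons(2-4) Ks by auto
  have nc: "Ks' ! j \<in> carrier R" "Us ! j \<in> carrier R" if "j < length Us" for j
    using h that nth_mem[of j Ks'] nth_mem[of j Us] by auto
  have cl: "(\<lambda>j. (k # Ks') ! j \<otimes> (u # Us) ! j) \<in> Suc ` {..<length Us} \<rightarrow> carrier R"
    using nc by auto
  have "(\<Oplus>j\<in>{..<length (u # Us)}. (k # Ks') ! j \<otimes> (u # Us) ! j)
      = k \<otimes> u \<oplus> (\<Oplus>j\<in>Suc ` {..<length Us}. (k # Ks') ! j \<otimes> (u # Us) ! j)"
    unfolding length_Cons lessThan_Suc_eq_insert_0 using cl h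
    by (subst finsum_insert) auto
  also have "(\<Oplus>j\<in>Suc ` {..<length Us}. (k # Ks') ! j \<otimes> (u # Us) ! j) = (\<Oplus>j\<in>{..<length Us}. Ks' ! j \<otimes> Us ! j)"
    using cl by (subst finsum_reindex) auto
  finally show ?case using Cons(1)[OF h(1-3)] Ks by simp
qed

definition fixset :: "('a \<Rightarrow> 'a) set \<Rightarrow> 'a set" where
  "fixset Gm = {x \<in> carrier R. \<forall>g\<in>Gm. g x = x}"

lemma fixset_subfield:
  assumes hom: "\<And>g. g \<in> Gm \<Longrightarrow> g \<in> ring_hom R R"
  shows "subfield (fixset Gm) R"
proof (rule subfieldI')
  show "subring (fixset Gm) R"
  proof (rule subringI)
    show "fixset Gm \<subseteq> carrier R" unfolding fixset_def by auto
    show "\<one> \<in> fixset Gm" unfolding fixset_def using hom ring_hom_one[of _ R R] by auto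
    show "\<ominus> h \<in> fixset Gm" if "h \<in> fixset Gm" for h
      using that unfolding fixset_def by (auto simp: endo_neg hom)
    show "h1 \<otimes> h2 \<in> fixset Gm" if "h1 \<in> fixset Gm" "h2 \<in> fixset Gm" for h1 h2
    proof -
      have *: "h1 \<in> carrier R" "h2 \<in> carrier R" "\<forall>g\<in>Gm. g h1 = h1" "\<forall>g\<in>Gm. g h2 = h2"
        using that unfolding fixset_def by auto
      have "g (h1 \<otimes> h2) = h1 \<otimes> h2" if "g \<in> Gm" for g
        using ring_hom_mult[OF hom[OF that] *(1,2)] *(3,4)[rule_format, OF that] by simp
      then show ?thesis using * unfolding fixset_def by auto
    qed
    show "h1 \<oplus> h2 \<in> fixset Gm" if "h1 \<in> fixset Gm" "h2 \<in> fixset Gm" for h1 h2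
    proof -
      have *: "h1 \<in> carrier R" "h2 \<in> carrier R" "\<forall>g\<in>Gm. g h1 = h1" "\<forall>g\<in>Gm. g h2 = h2"
        using that unfolding fixset_def by auto
      have "g (h1 \<oplus> h2) = h1 \<oplus> h2" if "g \<in> Gm" for g
        using ring_hom_add[OF hom[OF that] *(1,2)] *(3,4)[rule_format, OF that] by simp
      then show ?thesis using * unfolding fixset_def by auto
    qed
  qed
next
  fix k assume k: "k \<in> fixset Gm - {\<zero>}"
  then have kR: "k \<in> carrier R" "k \<noteq> \<zero>" unfolding fixset_def by auto
  then have iv: "inv k \<in> carrier R" "inv k \<otimes> k = \<one>" "k \<otimes> inv k = \<one>"
    by (auto simp: field_Units)
  have "g (inv k) = inv k" if g: "g \<in> Gm" for g
  proof -
    have gk: "g k = k" using k g unfolding fixset_def by auto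
    have gi: "g (inv k) \<in> carrier R" using ring_hom_closed[OF hom[OF g] iv(1)] .
    have "g (inv k) \<otimes> k = \<one>"
      using ring_hom_mult[OF hom[OF g] iv(1) kR(1)] gk iv(2) ring_hom_one[OF hom[OF g]] by simp
    have "g (inv k) = g (inv k) \<otimes> (k \<otimes> inv k)" using gi iv(3) by simp
    also have "\<dots> = (g (inv k) \<otimes> k) \<otimes> inv k" using gi kR iv by (simp only: m_assoc)
    also have "\<dots> = inv k" using \<open>g (inv k) \<otimes> k = \<one>\<close> iv by simp
    finally show ?thesis .
  qed
  then show "inv k \<in> fixset Gm" unfolding fixset_def using iv by auto
qed

end

context field
begin

lemma neg_of_sum_zero: "u \<in> carrier R \<Longrightarrow> P \<in> carrier R \<Longrightarrow> P = (u \<oplus> P) \<ominus> u"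
  by algebra

lemma minus_zero_eq: "a \<in> carrier R \<Longrightarrow> b \<in> carrier R \<Longrightarrow> a \<ominus> b = \<zero> \<Longrightarrow> a = b"
  using minus_plus_cancel[of a b] by simp

lemma dedekind_aux:
  assumes F1: "\<one> \<in> F" and Fm: "\<And>x y. x \<in> F \<Longrightarrow> y \<in> F \<Longrightarrow> x \<otimes> y \<in> F" and FR: "F \<subseteq> carrier R"
    and hom: "\<And>s x. s \<in> D0 \<Longrightarrow> x \<in> F \<Longrightarrow> s x \<in> carrier R"
    and mult: "\<And>s x y. s \<in> D0 \<Longrightarrow> x \<in> F \<Longrightarrow> y \<in> F \<Longrightarrow> s (x \<otimes> y) = s x \<otimes> s y"
    and one: "\<And>s. s \<in> D0 \<Longrightarrow> s \<one> = \<one>"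
    and dist: "\<And>s t. s \<in> D0 \<Longrightarrow> t \<in> D0 \<Longrightarrow> s \<noteq> t \<Longrightarrow> \<exists>x\<in>F. s x \<noteq> t x"
  shows "finite D \<Longrightarrow> D \<subseteq> D0 \<Longrightarrow> c \<in> D \<rightarrow> carrier R \<Longrightarrow>
    (\<And>x. x \<in> F \<Longrightarrow> (\<Oplus>s\<in>D. c s \<otimes> s x) = \<zero>) \<Longrightarrow> s0 \<in> D \<Longrightarrow> c s0 = \<zero>"
proof (induct D arbitrary: c s0 rule: finite_induct)
  case empty then show ?case by simp
next
  case (insert t D)
  have D0: "D \<subseteq> D0" "t \<in> D0" using insert by auto
  have cD: "c \<in> D \<rightarrow> carrier R" "c t \<in> carrier R" using insert(5) by auto
  have clx: "(\<lambda>s. c s \<otimes> s x) \<in> D \<rightarrow> carrier R" if "x \<in> F" for x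
    using cD hom D0 that by (auto simp: Pi_iff subset_iff)
  have A: "c t \<otimes> t x \<oplus> (\<Oplus>s\<in>D. c s \<otimes> s x) = \<zero>" if x: "x \<in> F" for x
  proof -
    have "(\<Oplus>s\<in>insert t D. c s \<otimes> s x) = c t \<otimes> t x \<oplus> (\<Oplus>s\<in>D. c s \<otimes> s x)"
      using insert(1,2) cD hom[OF D0(2) x] clx[OF x] by (subst finsum_insert) auto
    then show ?thesis using insert(6) x by simp
  qed
  have allD: "c s' = \<zero>" if s: "s' \<in> D" for s'
  proof -
    have "s' \<noteq> t" using s insert(2) by auto
    then obtain y where y: "y \<in> F" "s' y \<noteq> t y" using dist D0 s by blast
    have yR: "y \<in> carrier R" using y FR by auto
    have ty: "t y \<in> carrier R" using hom[OF D0(2) y(1)] .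
    define c' where "c' = (\<lambda>s. c s \<otimes> (s y \<ominus> t y))"
    have c'c: "c' \<in> D \<rightarrow> carrier R" unfolding c'_def using cD hom D0 y ty by (auto simp: Pi_iff subset_iff intro!: minus_closed)
    have rel: "(\<Oplus>s\<in>D. c' s \<otimes> s x) = \<zero>" if x: "x \<in> F" for x
    proof -
      have xR: "x \<in> carrier R" using x FR by auto
      have tx: "t x \<in> carrier R" using hom[OF D0(2) x] .
      have yx: "y \<otimes> x \<in> F" using Fm[OF y(1) x] .
      define P where "P = (\<Oplus>s\<in>D. c s \<otimes> (s y \<otimes> s x))"
      define Q where "Q = (\<Oplus>s\<in>D. t y \<otimes> (c s \<otimes> s x))"
      have clP: "(\<lambda>s. c s \<otimes> (s y \<otimes> s x)) \<in> D \<rightarrow> carrier R"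
        using cD hom D0 x y by (auto simp: Pi_iff subset_iff)
      have clQ: "(\<lambda>s. t y \<otimes> (c s \<otimes> s x)) \<in> D \<rightarrow> carrier R"
        using cD hom D0 x y ty by (auto simp: Pi_iff subset_iff)
      have PR: "P \<in> carrier R" unfolding P_def using clP by (rule finsum_closed)
      have QR: "Q \<in> carrier R" unfolding Q_def using clQ by (rule finsum_closed)
      have u1: "c t \<otimes> (t y \<otimes> t x) \<in> carrier R" using cD ty tx by simp
      have e1: "c t \<otimes> (t y \<otimes> t x) \<oplus> P = \<zero>"
      proof -
        have "(\<Oplus>s\<in>D. c s \<otimes> s (y \<otimes> x)) = P" unfolding P_def
          using D0 mult y x by (intro finsum_cong') (auto simp: clP subset_iff)
        then show ?thesis using A[OF yx] mult[OF D0(2) y(1) x] by simp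
      qed
      have e2: "c t \<otimes> (t y \<otimes> t x) \<oplus> Q = \<zero>"
      proof -
        have "t y \<otimes> (c t \<otimes> t x \<oplus> (\<Oplus>s\<in>D. c s \<otimes> s x)) = \<zero>" using A[OF x] ty by simp
        moreover have "t y \<otimes> (\<Oplus>s\<in>D. c s \<otimes> s x) = Q"
          unfolding Q_def using ty clx[OF x] insert(1) by (subst finsum_rdistr) auto
        moreover have "t y \<otimes> (c t \<otimes> t x \<oplus> (\<Oplus>s\<in>D. c s \<otimes> s x)) = t y \<otimes> (c t \<otimes> t x) \<oplus> t y \<otimes> (\<Oplus>s\<in>D. c s \<otimes> s x)"
          using ty cD tx finsum_closed[OF clx[OF x]] by (simp add: r_distr)
        moreover have "t y \<otimes> (c t \<otimes> t x) = c t \<otimes> (t y \<otimes> t x)"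
          using ty cD tx by (simp add: m_lcomm)
        ultimately show ?thesis by simp
      qed
      have PQ: "P = Q"
        using neg_of_sum_zero[OF u1 PR] neg_of_sum_zero[OF u1 QR] e1 e2 by simp
      have "(\<Oplus>s\<in>D. c' s \<otimes> s x) = (\<Oplus>s\<in>D. c s \<otimes> (s y \<otimes> s x) \<ominus> t y \<otimes> (c s \<otimes> s x))"
      proof (intro finsum_cong')
        fix s assume s: "s \<in> D"
        have h: "c s \<in> carrier R" "s y \<in> carrier R" "s x \<in> carrier R"
          using s cD hom D0 x y by auto
        show "c' s \<otimes> s x = c s \<otimes> (s y \<otimes> s x) \<ominus> t y \<otimes> (c s \<otimes> s x)"
          unfolding c'_def using h ty by algebra
      qed (use clP clQ in \<open>auto intro!: minus_closed\<close>)
      also have "\<dots> = P \<ominus> Q" unfolding P_def Q_def using insert(1) clP clQ by (rule finsum_diff)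
      also have "\<dots> = \<zero>" using PQ QR by simp
      finally show ?thesis .
    qed
    have "c' s' = \<zero>"
      by (rule insert(3)[of c' s', OF D0(1) c'c rel s])
    then have "c s' = \<zero> \<or> s' y \<ominus> t y = \<zero>"
    proof -
      have "c s' \<in> carrier R" "s' y \<ominus> t y \<in> carrier R" using cD s hom[OF _ y(1)] D0 ty by auto
      then show ?thesis using integral \<open>c' s' = \<zero>\<close> unfolding c'_def by blast
    qed
    moreover have "s' y \<ominus> t y \<noteq> \<zero>" using minus_zero_eq[of "s' y" "t y"] y hom[OF _ y(1)] D0 s ty by auto
    ultimately show ?thesis by simp
  qed
  have "(\<Oplus>s\<in>D. c s \<otimes> s \<one>) = (\<Oplus>s\<in>D. \<zero>)"
    using allD hom D0 F1 by (intro finsum_cong') (auto simp: subset_iff)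
  then have "c t \<otimes> t \<one> = \<zero>" using A[OF F1] cD hom[OF D0(2) F1] by simp
  then have ct: "c t = \<zero>" using one[OF D0(2)] cD by simp
  show ?case using insert(7) ct allD by auto
qed

end

context field
begin

lemma dedekind_bound:
  assumes K: "subfield K R" and F: "subfield F R" and KF: "K \<subseteq> F"
    and bs: "independent K bs" "Span K bs = F"
    and D: "finite D" and hom: "\<And>s. s \<in> D \<Longrightarrow> s \<in> ring_hom R R"
    and fixK: "\<And>s k. s \<in> D \<Longrightarrow> k \<in> K \<Longrightarrow> s k = k"
    and dist: "\<And>s t. s \<in> D \<Longrightarrow> t \<in> D \<Longrightarrow> s \<noteq> t \<Longrightarrow> \<exists>x\<in>F. s x \<noteq> t x"
  shows "card D \<le> length bs"
proof (rule ccontr)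
  assume "\<not> ?thesis"
  then have lt: "card {..<length bs} < card D" by simp
  have bsR: "set bs \<subseteq> carrier R" using independent_in_carrier[OF bs(1)] .
  have FR: "F \<subseteq> carrier R" using subfieldE(3)[OF F] .
  have sR: "s x \<in> carrier R" if "s \<in> D" "x \<in> carrier R" for s x
    using ring_hom_closed[OF hom[OF that(1)] that(2)] .
  obtain c where c: "c \<in> D \<rightarrow> carrier R" "\<exists>s\<in>D. c s \<noteq> \<zero>"
      "\<forall>i\<in>{..<length bs}. (\<Oplus>s\<in>D. c s \<otimes> s (bs ! i)) = \<zero>"
    using linsys[of "{..<length bs}" D "\<lambda>s i. s (bs ! i)"] lt D sR bsR nth_mem by blast
  have cR: "c s \<in> carrier R" if "s \<in> D" for s using c(1) that by auto
  define V where "V = {x \<in> carrier R. (\<Oplus>s\<in>D. c s \<otimes> s x) = \<zero>}"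
  have clx: "(\<lambda>s. c s \<otimes> s x) \<in> D \<rightarrow> carrier R" if "x \<in> carrier R" for x
    using cR c(1) sR that by auto
  have "subalgebra K V R"
  proof (intro subalgebra.intro)
    show "subgroup V (add_monoid R)"
    proof (rule add.subgroupI)
      show "V \<subseteq> carrier R" unfolding V_def by auto
      have "(\<Oplus>s\<in>D. c s \<otimes> s \<zero>) = (\<Oplus>s\<in>D. \<zero>)"
        using cR c(1) by (intro finsum_cong') (auto simp: Pi_iff endo_zero hom)
      then show "V \<noteq> {}" unfolding V_def by auto
    next
      fix a assume a: "a \<in> V"
      then have aR: "a \<in> carrier R" unfolding V_def by auto
      have "(\<Oplus>s\<in>D. c s \<otimes> s (\<ominus> a)) = (\<Oplus>s\<in>D. \<ominus> (c s \<otimes> s a))"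
        using cR aR sR by (intro finsum_cong') (auto simp: r_minus endo_neg hom)
      also have "\<dots> = (\<Oplus>s\<in>D. \<zero> \<ominus> (c s \<otimes> s a))"
        using cR c(1) aR sR by (intro finsum_cong') (auto simp: a_minus_def)
      also have "\<dots> = (\<Oplus>s\<in>D. \<zero>) \<ominus> (\<Oplus>s\<in>D. c s \<otimes> s a)"
        using D clx[OF aR] by (intro finsum_diff) auto
      also have "\<dots> = \<zero>" using a unfolding V_def by (simp add: a_minus_def)
      finally show "\<ominus> a \<in> V" unfolding V_def using aR by auto
    next
      fix a b assume a: "a \<in> V" and b: "b \<in> V"
      then have aR: "a \<in> carrier R" and bR: "b \<in> carrier R" unfolding V_def by auto
      have "(\<Oplus>s\<in>D. c s \<otimes> s (a \<oplus> b)) = (\<Oplus>s\<in>D. c s \<otimes> s a \<oplus> c s \<otimes> s b)"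
        using cR c(1) hom aR bR sR by (intro finsum_cong') (auto simp: ring_hom_add[of _ R R] r_distr)
      also have "\<dots> = (\<Oplus>s\<in>D. c s \<otimes> s a) \<oplus> (\<Oplus>s\<in>D. c s \<otimes> s b)"
        using clx[OF aR] clx[OF bR] by (rule finsum_addf)
      also have "\<dots> = \<zero>" using a b unfolding V_def by simp
      finally show "a \<oplus> b \<in> V" unfolding V_def using aR bR by auto
    qed
  next
    show "subalgebra_axioms K V R"
    proof
      fix k v assume k: "k \<in> K" and v: "v \<in> V"
      have kR: "k \<in> carrier R" using k subfieldE(3)[OF K] by auto
      have vR: "v \<in> carrier R" using v unfolding V_def by auto
      have "(\<Oplus>s\<in>D. c s \<otimes> s (k \<otimes> v)) = (\<Oplus>s\<in>D. k \<otimes> (c s \<otimes> s v))"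
      proof (intro finsum_cong')
        fix s assume s: "s \<in> D"
        have "s (k \<otimes> v) = k \<otimes> s v" using ring_hom_mult[OF hom[OF s] kR vR] fixK[OF s k] by simp
        then show "c s \<otimes> s (k \<otimes> v) = k \<otimes> (c s \<otimes> s v)"
          using cR c(1) s kR sR[OF s vR] by (simp add: m_lcomm)
      qed (use cR kR sR vR in auto)
      also have "\<dots> = k \<otimes> (\<Oplus>s\<in>D. c s \<otimes> s v)"
        using D kR clx[OF vR] by (subst finsum_rdistr) auto
      also have "\<dots> = \<zero>" using v kR unfolding V_def by simp
      finally show "k \<otimes> v \<in> V" unfolding V_def using kR vR by auto
    qed
  qed
  moreover have "set bs \<subseteq> V"
  proof
    fix u assume "u \<in> set bs"
    then obtain i where i: "i < length bs" "u = bs ! i" by (auto simp: in_set_conv_nth)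
    then show "u \<in> V" using c(3) bsR nth_mem[OF i(1)] unfolding V_def by auto
  qed
  ultimately have "Span K bs \<subseteq> V" using subalgebra_Span_incl[OF K] by blast
  then have rel: "(\<Oplus>s\<in>D. c s \<otimes> s x) = \<zero>" if "x \<in> F" for x
    using that bs(2) unfolding V_def by auto
  have "\<forall>s\<in>D. c s = \<zero>"
  proof
    fix s0 assume s0: "s0 \<in> D"
    show "c s0 = \<zero>"
    proof (rule dedekind_aux[of F D, OF _ _ _ _ _ _ _ D subset_refl c(1) rel s0])
      show "\<one> \<in> F" using subringE(3)[OF subfieldE(1)[OF F]] .
      show "x \<otimes> y \<in> F" if "x \<in> F" "y \<in> F" for x y using subringE(6)[OF subfieldE(1)[OF F]] that .
      show "F \<subseteq> carrier R" using FR .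
      show "s x \<in> carrier R" if "s \<in> D" "x \<in> F" for s x using sR that FR by auto
      show "s (x \<otimes> y) = s x \<otimes> s y" if "s \<in> D" "x \<in> F" "y \<in> F" for s x y
        using ring_hom_mult[OF hom[OF that(1)]] that FR by auto
      show "s \<one> = \<one>" if "s \<in> D" for s using ring_hom_one[OF hom[OF that]] .
      show "\<exists>x\<in>F. s x \<noteq> t x" if "s \<in> D" "t \<in> D" "s \<noteq> t" for s t using dist that .
    qed
  qed
  then show False using c(2) by blast
qed

end

context field
begin

lemma artin_bound:
  assumes fin: "finite Gm" and hom: "\<And>g. g \<in> Gm \<Longrightarrow> g \<in> ring_hom R R"
    and idin: "i0 \<in> Gm" "\<And>x. x \<in> carrier R \<Longrightarrow> i0 x = x"
    and trans: "\<And>t d. t \<in> Gm \<Longrightarrow> d \<in> Gm \<Longrightarrow> \<exists>g\<in>Gm. \<forall>x\<in>carrier R. t (g x) = d x"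
    and ind: "independent (fixset Gm) us"
  shows "length us \<le> card Gm"
proof (rule ccontr)
  assume nle: "\<not> ?thesis"
  define m where "m = length us"
  define J where "J = {..<m}"
  have lt: "card Gm < card J" using nle unfolding J_def m_def by simp
  have usR: "set us \<subseteq> carrier R" using independent_in_carrier[OF ind] .
  have uR: "us ! j \<in> carrier R" if "j \<in> J" for j using that usR nth_mem unfolding J_def m_def by auto
  have gR: "g x \<in> carrier R" if "g \<in> Gm" "x \<in> carrier R" for g x
    using ring_hom_closed[OF hom[OF that(1)] that(2)] .
  define Sol where "Sol = (\<lambda>c. c \<in> J \<rightarrow> carrier R \<and> (\<forall>g\<in>Gm. (\<Oplus>j\<in>J. c j \<otimes> g (us ! j)) = \<zero>))"
  define supp where "supp = (\<lambda>c. {j\<in>J. c j \<noteq> \<zero>})"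
  have finJ: "finite J" unfolding J_def by simp
  obtain c00 where "Sol c00 \<and> supp c00 \<noteq> {}"
  proof -
    obtain c where "c \<in> J \<rightarrow> carrier R" "\<exists>j\<in>J. c j \<noteq> \<zero>" "\<forall>g\<in>Gm. (\<Oplus>j\<in>J. c j \<otimes> g (us ! j)) = \<zero>"
      using linsys[of Gm J "\<lambda>j g. g (us ! j)"] fin finJ lt uR gR by blast
    then show ?thesis using that unfolding Sol_def supp_def by blast
  qed
  then obtain c0 where c0: "Sol c0" "supp c0 \<noteq> {}"
    and minc: "\<And>c. Sol c \<Longrightarrow> supp c \<noteq> {} \<Longrightarrow> card (supp c0) \<le> card (supp c)"
    using ex_has_least_nat[of "\<lambda>c. Sol c \<and> supp c \<noteq> {}" c00 "\<lambda>c. card (supp c)"] by blast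
  obtain k where k: "k \<in> J" "c0 k \<noteq> \<zero>" using c0(2) unfolding supp_def by auto
  have c0R: "c0 j \<in> carrier R" if "j \<in> J" for j using c0(1) that unfolding Sol_def by auto
  define a where "a = inv (c0 k)"
  have a: "a \<in> carrier R" "a \<otimes> c0 k = \<one>" using k c0R[OF k(1)] unfolding a_def by (auto simp: field_Units)
  have a0: "a \<noteq> \<zero>" using a c0R[OF k(1)] by auto
  define c1 where "c1 = (\<lambda>j. a \<otimes> c0 j)"
  have c1R: "c1 j \<in> carrier R" if "j \<in> J" for j using a c0R that unfolding c1_def by auto
  have c1k: "c1 k = \<one>" using a unfolding c1_def by simp
  have Sol1: "Sol c1"
  proof -
    have "(\<Oplus>j\<in>J. c1 j \<otimes> g (us ! j)) = \<zero>" if g: "g \<in> Gm" for g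
    proof -
      have "(\<Oplus>j\<in>J. c1 j \<otimes> g (us ! j)) = (\<Oplus>j\<in>J. a \<otimes> (c0 j \<otimes> g (us ! j)))"
        unfolding c1_def using a c0R uR gR g by (intro finsum_cong') (auto simp: m_assoc)
      also have "\<dots> = a \<otimes> (\<Oplus>j\<in>J. c0 j \<otimes> g (us ! j))"
        using a c0R uR gR g finJ by (subst finsum_rdistr) auto
      also have "\<dots> = \<zero>" using c0(1) g a unfolding Sol_def by simp
      finally show ?thesis .
    qed
    then show ?thesis unfolding Sol_def using c1R by auto
  qed
  have supp1: "supp c1 = supp c0"
  proof -
    have "c1 j \<noteq> \<zero> \<longleftrightarrow> c0 j \<noteq> \<zero>" if "j \<in> J" for j
      using integral[of a "c0 j"] a a0 c0R[OF that] unfolding c1_def by auto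
    then show ?thesis unfolding supp_def by auto
  qed
  have fix1: "t (c1 j) = c1 j" if t: "t \<in> Gm" and j: "j \<in> J" for t j
  proof -
    define d where "d = (\<lambda>j. t (c1 j) \<ominus> c1 j)"
    have dR: "d j \<in> carrier R" if "j \<in> J" for j unfolding d_def using that c1R gR t by auto
    have Sold: "Sol d"
    proof -
      have "(\<Oplus>j\<in>J. d j \<otimes> dl (us ! j)) = \<zero>" if dl: "dl \<in> Gm" for dl
      proof -
        obtain g where g: "g \<in> Gm" "\<And>x. x \<in> carrier R \<Longrightarrow> t (g x) = dl x" using trans[OF t dl] by blast
        have "(\<Oplus>j\<in>J. d j \<otimes> dl (us ! j)) = (\<Oplus>j\<in>J. t (c1 j) \<otimes> dl (us ! j) \<ominus> c1 j \<otimes> dl (us ! j))"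
        proof (intro finsum_cong')
          fix j assume j: "j \<in> J"
          have h: "t (c1 j) \<in> carrier R" "c1 j \<in> carrier R" "dl (us ! j) \<in> carrier R"
            using c1R[OF j] gR[OF t] gR[OF dl] uR[OF j] by auto
          show "d j \<otimes> dl (us ! j) = t (c1 j) \<otimes> dl (us ! j) \<ominus> c1 j \<otimes> dl (us ! j)"
            unfolding d_def using h by algebra
        qed (use dR uR gR dl t c1R in \<open>auto intro!: minus_closed\<close>)
        also have "\<dots> = (\<Oplus>j\<in>J. t (c1 j) \<otimes> dl (us ! j)) \<ominus> (\<Oplus>j\<in>J. c1 j \<otimes> dl (us ! j))"
          using finJ c1R uR gR t dl by (intro finsum_diff) auto
        also have "(\<Oplus>j\<in>J. t (c1 j) \<otimes> dl (us ! j)) = (\<Oplus>j\<in>J. t (c1 j \<otimes> g (us ! j)))"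
          using c1R uR gR t g dl ring_hom_mult[OF hom[OF t]] by (intro finsum_cong') auto
        also have "\<dots> = t (\<Oplus>j\<in>J. c1 j \<otimes> g (us ! j))"
          using c1R uR gR g by (intro endo_finsum[symmetric] hom[OF t]) auto
        also have "\<dots> = \<zero>" using Sol1 g endo_zero[OF hom[OF t]] unfolding Sol_def by simp
        also have "(\<Oplus>j\<in>J. c1 j \<otimes> dl (us ! j)) = \<zero>" using Sol1 dl unfolding Sol_def by simp
        finally show ?thesis by (simp add: a_minus_def)
      qed
      then show ?thesis unfolding Sol_def using dR by auto
    qed
    have "supp d \<subseteq> supp c1 - {k}"
    proof
      fix j assume "j \<in> supp d"
      then have j: "j \<in> J" "d j \<noteq> \<zero>" unfolding supp_def by auto
      have "j \<noteq> k" using j(2) c1k ring_hom_one[OF hom[OF t]] unfolding d_def by auto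
      moreover have "c1 j \<noteq> \<zero>" using j(2) endo_zero[OF hom[OF t]] unfolding d_def by auto
      ultimately show "j \<in> supp c1 - {k}" using j(1) unfolding supp_def by auto
    qed
    moreover have "k \<in> supp c1" using c1k k(1) unfolding supp_def by auto
    ultimately have "supp d \<subset> supp c1" by blast
    moreover have "finite (supp c1)" using finJ unfolding supp_def by auto
    ultimately have "card (supp d) < card (supp c0)" using psubset_card_mono supp1 by metis
    then have "supp d = {}" using minc[OF Sold] by linarith
    then have "d j = \<zero>" using j unfolding supp_def by auto
    then show ?thesis using minus_zero_eq[of "t (c1 j)" "c1 j"] gR[OF t c1R[OF j]] c1R[OF j]
      unfolding d_def by auto
  qed
  have c1fix: "c1 j \<in> fixset Gm" if "j \<in> J" for j
    using fix1 that c1R unfolding fixset_def by auto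
  have "(\<Oplus>j\<in>J. c1 j \<otimes> us ! j) = (\<Oplus>j\<in>J. c1 j \<otimes> i0 (us ! j))"
    using idin(2) uR c1R by (intro finsum_cong') auto
  also have "\<dots> = \<zero>" using Sol1 idin(1) unfolding Sol_def by auto
  finally have z: "(\<Oplus>j\<in>J. c1 j \<otimes> us ! j) = \<zero>" .
  define Ks where "Ks = map c1 [0..<m]"
  have KsK: "set Ks \<subseteq> fixset Gm" unfolding Ks_def J_def using c1fix J_def by auto
  have KsR: "set Ks \<subseteq> carrier R" unfolding Ks_def J_def using c1R J_def by auto
  have "combine Ks us = (\<Oplus>j\<in>{..<length us}. Ks ! j \<otimes> us ! j)"
    using combine_finsum[of Ks us] KsR usR unfolding Ks_def m_def by simp
  also have "\<dots> = (\<Oplus>j\<in>J. c1 j \<otimes> us ! j)"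
    using c1R uR unfolding J_def m_def Ks_def by (intro finsum_cong') auto
  finally have "combine Ks us = \<zero>" using z by simp
  then have "set (take (length us) Ks) \<subseteq> {\<zero>}"
    using independent_imp_trivial_combine[OF fixset_subfield[OF hom] ind KsK] by blast
  moreover have "take (length us) Ks = Ks" unfolding Ks_def m_def by simp
  moreover have "c1 k \<in> set Ks" using k(1) unfolding Ks_def J_def by auto
  ultimately show False using c1k by auto
qed

end

context field
begin

lemma fd_from_bound:
  assumes K: "subfield K R" and bnd: "\<And>us. independent K us \<Longrightarrow> length us \<le> N"
  shows "\<exists>bs. independent K bs \<and> Span K bs = carrier R \<and> length bs \<le> N"
proof -
  define S where "S = {us. independent K us}"
  have "length ` S \<subseteq> {..N}" unfolding S_def using bnd by auto
  moreover have "[] \<in> S" unfolding S_def by simp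
  hence "length ` S \<noteq> {}" by blast
  ultimately obtain m where m: "m \<in> length ` S" and greatest: "\<And>k. k \<in> length ` S \<Longrightarrow> k \<le> m"
    by (meson Max_ge Max_in finite_atMost rev_finite_subset)
  then obtain Us where Us: "independent K Us" "m = length Us" unfolding S_def by auto
  have UsR: "set Us \<subseteq> carrier R" using independent_in_carrier[OF Us(1)] .
  have "Span K Us = carrier R"
  proof (rule ccontr)
    assume "Span K Us \<noteq> carrier R"
    moreover have "Span K Us \<subseteq> carrier R" using Span_in_carrier[OF subfieldE(3)[OF K] UsR] .
    ultimately obtain v where v: "v \<in> carrier R" "v \<notin> Span K Us" by blast
    hence "independent K (v # Us)" using independent.li_Cons[OF _ _ Us(1)] by auto
    hence "length (v # Us) \<le> m" using greatest[of "length (v # Us)"] unfolding S_def by blast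
    thus False using Us(2) by simp
  qed
  thus ?thesis using Us bnd by blast
qed

lemma carrier_gal_group:
  "carrier (gal_group R K) = {f. f \<in> ring_iso R R \<and> f \<in> extensional (carrier R) \<and> (\<forall>x\<in>K. f x = x)}"
  unfolding gal_group_def aut_group_def by auto

lemma gal_bound:
  assumes K: "subfield K R" and bs: "independent K bs" "Span K bs = carrier R"
  shows "finite (carrier (gal_group R K)) \<and> card (carrier (gal_group R K)) \<le> length bs"
proof -
  define A where "A = carrier (gal_group R K)"
  have le: "card D \<le> length bs" if D: "finite D" "D \<subseteq> A" for D
  proof (rule dedekind_bound[OF K carrier_is_subfield _ bs D(1)])
    show "K \<subseteq> carrier R" using subfieldE(3)[OF K] .
    show "s \<in> ring_hom R R" if "s \<in> D" for s
      using that D(2) unfolding A_def carrier_gal_group ring_iso_def by auto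
    show "s k = k" if "s \<in> D" "k \<in> K" for s k
      using that D(2) unfolding A_def carrier_gal_group by auto
    show "\<exists>x\<in>carrier R. s x \<noteq> t x" if "s \<in> D" "t \<in> D" "s \<noteq> t" for s t
    proof (rule ccontr)
      assume "\<not> ?thesis"
      moreover have "s \<in> extensional (carrier R)" "t \<in> extensional (carrier R)"
        using that D(2) unfolding A_def carrier_gal_group by auto
      ultimately have "s = t" by (intro extensionalityI) auto
      then show False using that by simp
    qed
  qed
  have fA: "finite A"
  proof (rule ccontr)
    assume "infinite A"
    then obtain B where "finite B" "card B = Suc (length bs)" "B \<subseteq> A"
      using infinite_arbitrarily_large by blast
    then show False using le[of B] by simp
  qed
  then show ?thesis using le[OF fA] unfolding A_def by auto
qed

lemma artin_galois:
  assumes fin: "finite Gm" and aut: "Gm \<subseteq> {f. f \<in> ring_iso R R \<and> f \<in> extensional (carrier R)}"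
    and idin: "i0 \<in> Gm" "\<And>x. x \<in> carrier R \<Longrightarrow> i0 x = x"
    and trans: "\<And>t d. t \<in> Gm \<Longrightarrow> d \<in> Gm \<Longrightarrow> \<exists>g\<in>Gm. \<forall>x\<in>carrier R. t (g x) = d x"
  shows "subfield (fixset Gm) R" "finite_dimension (fixset Gm) (carrier R)"
    "dim (fixset Gm) (carrier R) = card Gm" "carrier (gal_group R (fixset Gm)) = Gm"
proof -
  have hom: "g \<in> ring_hom R R" if "g \<in> Gm" for g using aut that unfolding ring_iso_def by auto
  show K: "subfield (fixset Gm) R" using fixset_subfield hom by blast
  obtain bs where bs: "independent (fixset Gm) bs" "Span (fixset Gm) bs = carrier R" "length bs \<le> card Gm"
    using fd_from_bound[OF K artin_bound[OF fin hom idin trans]] by blast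
  have dimn: "dimension (length bs) (fixset Gm) (carrier R)"
    using dimensionI[OF K bs(1)] bs(2) by simp
  show "finite_dimension (fixset Gm) (carrier R)" using finite_dimensionI[OF dimn] .
  have dimv: "dim (fixset Gm) (carrier R) = length bs" using dimI[OF K dimn] unfolding over_def .
  have gb: "finite (carrier (gal_group R (fixset Gm)))" "card (carrier (gal_group R (fixset Gm))) \<le> length bs"
    using gal_bound[OF K bs(1,2)] by auto
  have sub: "Gm \<subseteq> carrier (gal_group R (fixset Gm))"
    using aut unfolding carrier_gal_group fixset_def by auto
  have "card Gm \<le> card (carrier (gal_group R (fixset Gm)))" using card_mono[OF gb(1) sub] .
  then have eq: "card Gm = card (carrier (gal_group R (fixset Gm)))" "length bs = card Gm"
    using gb(2) bs(3) by auto
  show "dim (fixset Gm) (carrier R) = card Gm" using dimv eq by simp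
  show "carrier (gal_group R (fixset Gm)) = Gm" using card_subset_eq[OF gb(1) sub eq(1)] by simp
qed

end

locale gal_setup = G: group G + E: field E for G and E (structure) +
  fixes psi
  assumes finG: "finite (carrier G)" and psi_hom: "psi \<in> hom G (aut_group E)"
begin

lemma psi_aut: "a \<in> carrier G \<Longrightarrow> psi a \<in> ring_iso E E \<and> psi a \<in> extensional (carrier E)"
  using psi_hom unfolding hom_def aut_group_def by auto

lemma psi_ringhom: "a \<in> carrier G \<Longrightarrow> psi a \<in> ring_hom E E"
  using psi_aut unfolding ring_iso_def by auto

lemma psiR: "a \<in> carrier G \<Longrightarrow> x \<in> carrier E \<Longrightarrow> psi a x \<in> carrier E"
  using ring_hom_closed[OF psi_ringhom] by blast

lemma psi_compose: "a \<in> carrier G \<Longrightarrow> b \<in> carrier G \<Longrightarrow> psi (a \<otimes>\<^bsub>G\<^esub> b) = compose (carrier E) (psi a) (psi b)"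
  using psi_hom unfolding hom_def aut_group_def by auto

lemma psi_mult: "a \<in> carrier G \<Longrightarrow> b \<in> carrier G \<Longrightarrow> x \<in> carrier E \<Longrightarrow> psi (a \<otimes>\<^bsub>G\<^esub> b) x = psi a (psi b x)"
  using psi_compose by (simp add: compose_eq)

lemma psi_one_x: assumes x: "x \<in> carrier E" shows "psi \<one>\<^bsub>G\<^esub> x = x"
proof -
  have "psi \<one>\<^bsub>G\<^esub> (psi \<one>\<^bsub>G\<^esub> x) = psi \<one>\<^bsub>G\<^esub> x" using psi_mult[of "\<one>\<^bsub>G\<^esub>" "\<one>\<^bsub>G\<^esub>" x] x by simp
  moreover have "inj_on (psi \<one>\<^bsub>G\<^esub>) (carrier E)"
    using psi_aut[of "\<one>\<^bsub>G\<^esub>"] unfolding ring_iso_def bij_betw_def by auto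
  ultimately show ?thesis using x psiR[of "\<one>\<^bsub>G\<^esub>"] by (auto dest: inj_onD)
qed

lemma psi_one: "psi \<one>\<^bsub>G\<^esub> = restrict id (carrier E)"
proof (rule extensionalityI[of _ "carrier E"])
  show "psi \<one>\<^bsub>G\<^esub> \<in> extensional (carrier E)" using psi_aut by auto
qed (auto simp: psi_one_x)

lemma psi_inv_x: "a \<in> carrier G \<Longrightarrow> x \<in> carrier E \<Longrightarrow> psi (inv\<^bsub>G\<^esub> a) (psi a x) = x"
  using psi_mult[of "inv\<^bsub>G\<^esub> a" a x] psi_one_x by simp

lemma psi_inv_x': "a \<in> carrier G \<Longrightarrow> x \<in> carrier E \<Longrightarrow> psi a (psi (inv\<^bsub>G\<^esub> a) x) = x"
  using psi_mult[of a "inv\<^bsub>G\<^esub> a" x] psi_one_x by simp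

lemma fixed_field_eq: "fixed_field E psi H = E.fixset (psi ` H)"
  unfolding fixed_field_def E.fixset_def by auto

lemma artinH:
  assumes H: "subgroup H G"
  shows "subfield (fixed_field E psi H) E" "E.finite_dimension (fixed_field E psi H) (carrier E)"
    "E.dim (fixed_field E psi H) (carrier E) = card (psi ` H)"
    "carrier (gal_group E (fixed_field E psi H)) = psi ` H"
proof -
  have HG: "H \<subseteq> carrier G" using subgroup.subset[OF H] .
  have fin: "finite (psi ` H)" using finite_subset[OF HG finG] by simp
  have aut: "psi ` H \<subseteq> {f. f \<in> ring_iso E E \<and> f \<in> extensional (carrier E)}"
    using psi_aut HG by auto
  have idin: "psi \<one>\<^bsub>G\<^esub> \<in> psi ` H" using subgroup.one_closed[OF H] by simp
  have trans: "\<exists>g\<in>psi ` H. \<forall>x\<in>carrier E. t (g x) = d x" if td: "t \<in> psi ` H" "d \<in> psi ` H" for t d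
  proof -
    obtain a b where ab: "a \<in> H" "b \<in> H" "t = psi a" "d = psi b" using td by auto
    have abG: "a \<in> carrier G" "b \<in> carrier G" using ab HG by auto
    have "inv\<^bsub>G\<^esub> a \<otimes>\<^bsub>G\<^esub> b \<in> H" using ab H by (simp add: subgroup.m_closed subgroup.m_inv_closed)
    moreover have "t (psi (inv\<^bsub>G\<^esub> a \<otimes>\<^bsub>G\<^esub> b) x) = d x" if x: "x \<in> carrier E" for x
    proof -
      have "psi (inv\<^bsub>G\<^esub> a \<otimes>\<^bsub>G\<^esub> b) x = psi (inv\<^bsub>G\<^esub> a) (psi b x)"
        using psi_mult[of "inv\<^bsub>G\<^esub> a" b x] x abG by simp
      then have "t (psi (inv\<^bsub>G\<^esub> a \<otimes>\<^bsub>G\<^esub> b) x) = psi a (psi (inv\<^bsub>G\<^esub> a) (psi b x))"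
        using ab(3) by simp
      also have "\<dots> = psi b x" using psi_inv_x'[of a "psi b x"] abG psiR[of b x] x by simp
      finally show ?thesis using ab(4) by simp
    qed
    ultimately show ?thesis by blast
  qed
  note r = E.artin_galois[OF fin aut idin psi_one_x trans]
  show "subfield (fixed_field E psi H) E" unfolding fixed_field_eq by (rule r(1))
  show "E.finite_dimension (fixed_field E psi H) (carrier E)" unfolding fixed_field_eq by (rule r(2))
  show "E.dim (fixed_field E psi H) (carrier E) = card (psi ` H)" unfolding fixed_field_eq by (rule r(3))
  show "carrier (gal_group E (fixed_field E psi H)) = psi ` H" unfolding fixed_field_eq by (rule r(4))
qed

end

context gal_setup
begin

definition "E0 = fixed_field E psi (carrier G)"
definition "GAL = gal_group E E0"
definition "G0 = kernel G (aut_group E) psi"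

lemma carrier_GAL: "carrier GAL = psi ` carrier G"
  unfolding GAL_def E0_def using artinH(4)[OF G.subgroup_self] .

lemma GAL_eq: "GAL = (aut_group E)\<lparr>carrier := psi ` carrier G, one := psi \<one>\<^bsub>G\<^esub>\<rparr>"
proof -
  have "GAL = (aut_group E)\<lparr>carrier := carrier GAL\<rparr>" unfolding GAL_def gal_group_def by simp
  also have "\<dots> = (aut_group E)\<lparr>carrier := psi ` carrier G, one := psi \<one>\<^bsub>G\<^esub>\<rparr>"
    unfolding carrier_GAL psi_one by (simp add: aut_group_def)
  finally show ?thesis .
qed

lemma group_GAL: "group GAL"
  unfolding GAL_eq using G.hom_imp_img_group[OF psi_hom] .

lemma mult_GAL: "monoid.mult GAL = monoid.mult (aut_group E)" unfolding GAL_def gal_group_def by simp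
lemma one_GAL: "monoid.one GAL = monoid.one (aut_group E)" unfolding GAL_def gal_group_def by simp

lemma psi_hom_GAL: "psi \<in> hom G GAL"
  using psi_hom unfolding hom_def carrier_GAL mult_GAL by auto

lemma gh: "group_hom G GAL psi"
  unfolding group_hom_def group_hom_axioms_def using G.is_group group_GAL psi_hom_GAL by auto

lemma G0_eq: "G0 = kernel G GAL psi"
  unfolding G0_def kernel_def one_GAL by simp

lemma G0_normal: "G0 \<lhd> G"
  unfolding G0_eq using group_hom.normal_kernel[OF gh] .

lemma iso_part: "\<exists>h. h \<in> iso (G Mod G0) GAL \<and> (\<forall>s\<in>carrier G. h (G0 #>\<^bsub>G\<^esub> s) = psi s)"
proof (intro exI conjI ballI)
  show "(\<lambda>Cs. the_elem (psi ` Cs)) \<in> iso (G Mod G0) GAL"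
    unfolding G0_eq using group_hom.FactGroup_iso_set[OF gh] carrier_GAL by simp
next
  fix s assume s: "s \<in> carrier G"
  interpret gh: group_hom G GAL psi by (rule gh)
  have "psi ` (G0 #>\<^bsub>G\<^esub> s) = {psi s}" unfolding G0_eq
    by (auto simp add: kernel_def r_coset_def s intro!: imageI)
  then show "the_elem (psi ` (G0 #>\<^bsub>G\<^esub> s)) = psi s" by simp
qed

lemma G0_psi: "a \<in> G0 \<Longrightarrow> x \<in> carrier E \<Longrightarrow> psi a x = x"
  unfolding G0_def kernel_def aut_group_def by auto

lemma preimage_mono:
  assumes H1: "subgroup H1 G" and H2: "subgroup H2 G" "G0 \<subseteq> H2" and sub: "psi ` H1 \<subseteq> psi ` H2"
  shows "H1 \<subseteq> H2"
proof
  interpret gh: group_hom G GAL psi by (rule gh)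
  fix a assume a: "a \<in> H1"
  then obtain b where b: "b \<in> H2" "psi a = psi b" using sub by auto
  have aG: "a \<in> carrier G" and bG: "b \<in> carrier G"
    using a b subgroup.subset[OF H1] subgroup.subset[OF H2(1)] by auto
  have "psi (inv\<^bsub>G\<^esub> b \<otimes>\<^bsub>G\<^esub> a) = \<one>\<^bsub>GAL\<^esub>"
    using aG bG b(2) by simp
  then have "inv\<^bsub>G\<^esub> b \<otimes>\<^bsub>G\<^esub> a \<in> G0" unfolding G0_eq kernel_def using aG bG by auto
  then have "b \<otimes>\<^bsub>G\<^esub> (inv\<^bsub>G\<^esub> b \<otimes>\<^bsub>G\<^esub> a) \<in> H2" using H2 b(1) by (auto intro: subgroup.m_closed)
  moreover have "b \<otimes>\<^bsub>G\<^esub> (inv\<^bsub>G\<^esub> b \<otimes>\<^bsub>G\<^esub> a) = a" using aG bG by (simp add: G.m_assoc[symmetric])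
  ultimately show "a \<in> H2" by simp
qed

lemma fixed_mono_iff:
  assumes H1: "subgroup H1 G" "G0 \<subseteq> H1" and H2: "subgroup H2 G" "G0 \<subseteq> H2"
  shows "H1 \<subseteq> H2 \<longleftrightarrow> fixed_field E psi H2 \<subseteq> fixed_field E psi H1"
proof
  assume "H1 \<subseteq> H2" then show "fixed_field E psi H2 \<subseteq> fixed_field E psi H1"
    unfolding fixed_field_def by auto
next
  assume F: "fixed_field E psi H2 \<subseteq> fixed_field E psi H1"
  have "carrier (gal_group E (fixed_field E psi H1)) \<subseteq> carrier (gal_group E (fixed_field E psi H2))"
    using F unfolding E.carrier_gal_group by auto
  then have "psi ` H1 \<subseteq> psi ` H2" unfolding artinH(4)[OF H1(1)] artinH(4)[OF H2(1)] .
  then show "H1 \<subseteq> H2" using preimage_mono[OF H1(1) H2] by blast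
qed

end

context field
begin

lemma Span_mono_field:
  assumes K: "subfield K R" and K': "subfield K' R" and KK: "K \<subseteq> K'" and Us: "set Us \<subseteq> carrier R"
  shows "Span K Us \<subseteq> Span K' Us"
proof -
  have "subalgebra K' (Span K' Us) R" using Span_is_subalgebra[OF K' Us] .
  then have "subalgebra K (Span K' Us) R" using KK unfolding subalgebra_def subalgebra_axioms_def by auto
  then show ?thesis using subalgebra_Span_incl[OF K _ Span_base_incl[OF K' Us]] by blast
qed

lemma subalgebra_subfield:
  assumes F: "subfield F R" and KF: "K \<subseteq> F"
  shows "subalgebra K F R"
proof (intro subalgebra.intro)
  show "subgroup F (add_monoid R)" using subring.axioms(1)[OF subfieldE(1)[OF F]] .
  show "subalgebra_axioms K F R" unfolding subalgebra_axioms_def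
    using subringE(6)[OF subfieldE(1)[OF F]] KF by auto
qed

lemma Span_one_field:
  assumes F: "subfield F R" shows "Span F [\<one>] = F"
proof -
  have FR: "F \<subseteq> carrier R" using subfieldE(3)[OF F] .
  have "Span F [\<one>] = line_extension F \<one> {\<zero>}" by simp
  also have "\<dots> = F"
  proof
    show "line_extension F \<one> {\<zero>} \<subseteq> F"
      using FR by (auto simp: line_extension_mem_iff subset_iff)
    show "F \<subseteq> line_extension F \<one> {\<zero>}"
    proof
      fix k assume "k \<in> F"
      moreover then have "k = k \<otimes> \<one> \<oplus> \<zero>" using FR by auto
      ultimately show "k \<in> line_extension F \<one> {\<zero>}" unfolding line_extension_mem_iff by blast
    qed
  qed
  finally show ?thesis .
qed

end

context gal_setup
begin

lemma surj_part:
  assumes F: "subfield F E" and E0F: "E0 \<subseteq> F"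
  shows "\<exists>H. subgroup H G \<and> G0 \<subseteq> H \<and> fixed_field E psi H = F"
proof -
  have FE: "F \<subseteq> carrier E" using subfieldE(3)[OF F] .
  define H where "H = {a \<in> carrier G. \<forall>x\<in>F. psi a x = x}"
  have HG: "H \<subseteq> carrier G" unfolding H_def by auto
  have H: "subgroup H G"
  proof (rule G.subgroupI)
    show "H \<subseteq> carrier G" by (rule HG)
    show "H \<noteq> {}" using psi_one_x FE unfolding H_def by auto
  next
    fix a assume a: "a \<in> H"
    then have aG: "a \<in> carrier G" and ax: "\<And>x. x \<in> F \<Longrightarrow> psi a x = x" unfolding H_def by auto
    have "psi (inv\<^bsub>G\<^esub> a) x = x" if "x \<in> F" for x
      using psi_inv_x[OF aG, of x] ax[OF that] that FE by auto
    then show "inv\<^bsub>G\<^esub> a \<in> H" unfolding H_def using aG by auto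
  next
    fix a b assume a: "a \<in> H" and b: "b \<in> H"
    then have "a \<in> carrier G" "b \<in> carrier G" unfolding H_def by auto
    then show "a \<otimes>\<^bsub>G\<^esub> b \<in> H" using a b FE psi_mult unfolding H_def by (auto simp: subset_iff)
  qed
  have G0H: "G0 \<subseteq> H"
    using G0_psi FE unfolding H_def by (auto simp: G0_def kernel_def)
  define K' where "K' = fixed_field E psi H"
  have FK': "F \<subseteq> K'" unfolding K'_def fixed_field_def H_def using FE by auto
  note aH = artinH[OF H, folded K'_def]
  note a0 = artinH[OF G.subgroup_self, folded E0_def]
  have E0sub: "subfield E0 E" using a0(1) .
  have K'sub: "subfield K' E" using aH(1) .
  have K'E: "K' \<subseteq> carrier E" using subfieldE(3)[OF K'sub] .
  obtain bs0 where bs0: "set bs0 \<subseteq> carrier E" "E.independent E0 bs0" "E.Span E0 bs0 = carrier E"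
    using E.exists_base[OF E0sub E.finite_dimensionE[OF E0sub a0(2)]] by blast
  have fdF0: "E.finite_dimension E0 F"
    using E.subalbegra_incl_imp_finite_dimension[OF E0sub a0(2) E.subalgebra_subfield[OF F E0F] FE] .
  have "E.Span F bs0 = carrier E"
    using E.Span_mono_field[OF E0sub F E0F bs0(1)] bs0(3) E.Span_in_carrier[OF FE bs0(1)] by auto
  then have fdEF: "E.finite_dimension F (carrier E)"
    using E.Span_finite_dimension[OF F bs0(1)] by simp
  have fdFK': "E.finite_dimension F K'"
    using E.subalbegra_incl_imp_finite_dimension[OF F fdEF E.subalgebra_subfield[OF K'sub FK'] K'E] .
  have T1: "E.dim E0 (carrier E) = E.dim E0 F * E.dim F (carrier E)"
    using E.telescopic_base_dim(2)[OF E0sub F fdF0 fdEF] unfolding over_def .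
  have T2: "E.dim F (carrier E) = E.dim F K' * E.dim K' (carrier E)"
    using E.telescopic_base_dim(2)[OF F K'sub fdFK' aH(2)] unfolding over_def .
  define d where "d = E.dim E0 F"
  obtain Vs where Vs: "set Vs \<subseteq> carrier E" "E.independent E0 Vs" "length Vs = d" "E.Span E0 Vs = F"
    using E.exists_base[OF E0sub E.finite_dimensionE[OF E0sub fdF0]] unfolding d_def over_def by blast
  define Gm where "Gm = psi ` carrier G"
  define r :: "('c \<Rightarrow> 'c) \<Rightarrow> ('c \<Rightarrow> 'c)" where "r = (\<lambda>g. restrict g F)"
  define Rs where "Rs = r ` Gm"
  have finGm: "finite Gm" unfolding Gm_def using finG by simp
  have finGH: "finite (psi ` H)" using finite_subset[OF HG finG] by simp
  have cardRs: "card Rs \<le> d"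
  proof -
    define D where "D = inv_into Gm r ` Rs"
    have DG: "D \<subseteq> Gm" unfolding D_def Rs_def by (auto intro: inv_into_into)
    have finD: "finite D" using finite_subset[OF DG finGm] .
    have cD: "card D = card Rs" unfolding D_def
      by (rule card_image) (auto intro: inj_on_inv_into simp: Rs_def)
    have "card D \<le> length Vs"
    proof (rule E.dedekind_bound[OF E0sub F E0F Vs(2) Vs(4) finD])
      show "s \<in> ring_hom E E" if "s \<in> D" for s using that DG psi_ringhom unfolding Gm_def by auto
      show "s k = k" if "s \<in> D" "k \<in> E0" for s k
        using that DG unfolding Gm_def E0_def fixed_field_def by auto
      show "\<exists>x\<in>F. s x \<noteq> t x" if st: "s \<in> D" "t \<in> D" "s \<noteq> t" for s t
      proof -
        obtain \<rho>1 \<rho>2 where rr: "\<rho>1 \<in> Rs" "\<rho>2 \<in> Rs" "s = inv_into Gm r \<rho>1" "t = inv_into Gm r \<rho>2"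
          using st(1,2) unfolding D_def by auto
        have "r s = \<rho>1" "r t = \<rho>2" using rr f_inv_into_f[of _ r Gm] unfolding Rs_def by auto
        then have "r s \<noteq> r t" using rr st(3) by auto
        then show ?thesis unfolding r_def by (auto simp: restrict_def fun_eq_iff split: if_splits)
      qed
    qed
    then show ?thesis using cD Vs(3) by simp
  qed
  have fib: "card {g \<in> Gm. r g = \<rho>} \<le> card (psi ` H)" if \<rho>: "\<rho> \<in> Rs" for \<rho>
  proof -
    obtain a0 where a0G: "a0 \<in> carrier G" and \<rho>0: "\<rho> = r (psi a0)" using \<rho> unfolding Rs_def Gm_def by auto
    have "{g \<in> Gm. r g = \<rho>} \<subseteq> compose (carrier E) (psi a0) ` (psi ` H)"
    proof
      fix g assume g: "g \<in> {g \<in> Gm. r g = \<rho>}"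
      then obtain a where aG: "a \<in> carrier G" and ga: "g = psi a" and ra: "r (psi a) = r (psi a0)"
        using \<rho>0 unfolding Gm_def by auto
      have eqF: "psi a x = psi a0 x" if "x \<in> F" for x
        using ra that unfolding r_def by (metis restrict_apply')
      define b where "b = inv\<^bsub>G\<^esub> a0 \<otimes>\<^bsub>G\<^esub> a"
      have bG: "b \<in> carrier G" unfolding b_def using aG a0G by simp
      have "psi b x = x" if x: "x \<in> F" for x
      proof -
        have xE: "x \<in> carrier E" using x FE by auto
        have "psi b x = psi (inv\<^bsub>G\<^esub> a0) (psi a x)" unfolding b_def using psi_mult aG a0G xE by simp
        also have "\<dots> = psi (inv\<^bsub>G\<^esub> a0) (psi a0 x)" using eqF[OF x] by simp
        also have "\<dots> = x" using psi_inv_x[OF a0G xE] .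
        finally show ?thesis .
      qed
      then have bH: "b \<in> H" unfolding H_def using bG by auto
      have "a0 \<otimes>\<^bsub>G\<^esub> b = a" unfolding b_def using aG a0G by (simp add: G.m_assoc[symmetric])
      then have "g = compose (carrier E) (psi a0) (psi b)" using psi_compose[OF a0G bG] ga by simp
      then show "g \<in> compose (carrier E) (psi a0) ` (psi ` H)" using bH by auto
    qed
    then have "card {g \<in> Gm. r g = \<rho>} \<le> card (compose (carrier E) (psi a0) ` (psi ` H))"
      using finGH by (intro card_mono) auto
    also have "\<dots> \<le> card (psi ` H)" using card_image_le[OF finGH] .
    finally show ?thesis .
  qed
  have "Gm = (\<Union>\<rho>\<in>Rs. {g \<in> Gm. r g = \<rho>})" unfolding Rs_def by auto
  then have "card Gm \<le> (\<Sum>\<rho>\<in>Rs. card {g \<in> Gm. r g = \<rho>})"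
    using card_UN_le[of Rs "\<lambda>\<rho>. {g \<in> Gm. r g = \<rho>}"] finGm unfolding Rs_def by simp
  also have "\<dots> \<le> card Rs * card (psi ` H)" using sum_bounded_above[of Rs _ "card (psi ` H)"] fib by auto
  also have "\<dots> \<le> d * card (psi ` H)" using cardRs by simp
  finally have count: "card Gm \<le> d * card (psi ` H)" .
  have one_ne: "\<one>\<^bsub>E\<^esub> \<noteq> \<zero>\<^bsub>E\<^esub>" by simp
  have dpos: "d > 0"
  proof (rule ccontr)
    assume "\<not> d > 0"
    then have "E.dimension 0 E0 F" using E.finite_dimensionE[OF E0sub fdF0] unfolding d_def over_def by simp
    then have "F = {\<zero>\<^bsub>E\<^esub>}" using E.dimension_zero[OF E0sub] by blast
    then show False using subringE(3)[OF subfieldE(1)[OF F]] one_ne by auto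
  qed
  have cpos: "card (psi ` H) > 0" using finGH subgroup.one_closed[OF H] by (auto simp: card_gt_0_iff)
  define b where "b = E.dim F K'"
  have "d * (b * card (psi ` H)) \<le> d * card (psi ` H)"
    using count T1 T2 a0(3) aH(3) unfolding Gm_def d_def b_def by simp
  then have "b * card (psi ` H) \<le> card (psi ` H)" using dpos by simp
  then have b1: "b \<le> 1" using cpos by (metis mult_le_cancel2 mult_1)
  have dimb: "E.dimension b F K'" using E.finite_dimensionE[OF F fdFK'] unfolding b_def over_def .
  have "b \<noteq> 0"
  proof
    assume "b = 0"
    then have "K' = {\<zero>\<^bsub>E\<^esub>}" using E.dimension_zero[OF F] dimb by blast
    then show False using subringE(3)[OF subfieldE(1)[OF K'sub]] one_ne by auto
  qed
  then have dim1: "E.dimension 1 F K'" using dimb b1 by (metis le_antisym less_one not_le)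
  have ind1: "E.independent F [\<one>\<^bsub>E\<^esub>]"
    by (rule E.independent.li_Cons) auto
  have "E.Span F [\<one>\<^bsub>E\<^esub>] = K'"
    using E.independent_length_eq_dimension[OF F dim1 ind1] subringE(3)[OF subfieldE(1)[OF K'sub]] by simp
  then have "K' = F" using E.Span_one_field[OF F] by simp
  then show ?thesis using H G0H unfolding K'_def by blast
qed

end

theorem proposition3p9:
  fixes G :: "('g, 'n) monoid_scheme" (structure)
    and E :: "('e, 'm) ring_scheme"
    and psi :: "'g \<Rightarrow> 'e \<Rightarrow> 'e"
  assumes "group G" and "finite (carrier G)"
    and "number_field E"
    and "psi \<in> hom G (aut_group E)"
  defines "G0 \<equiv> kernel G (aut_group E) psi"
    and "E0 \<equiv> fixed_field E psi (carrier G)"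
  shows "galois_ext E E0
    \<and> G0 \<lhd> G
    \<and> (\<exists>h. h \<in> iso (G Mod G0) (gal_group E E0)
           \<and> (\<forall>\<sigma>\<in>carrier G. h (G0 #> \<sigma>) = psi \<sigma>))
    \<and> bij_betw (fixed_field E psi) {H. subgroup H G \<and> G0 \<subseteq> H} {F. subfield F E \<and> E0 \<subseteq> F}
    \<and> (\<forall>H1 H2. subgroup H1 G \<and> G0 \<subseteq> H1 \<longrightarrow> subgroup H2 G \<and> G0 \<subseteq> H2 \<longrightarrow>
          (H1 \<subseteq> H2 \<longleftrightarrow> fixed_field E psi H2 \<subseteq> fixed_field E psi H1))"
proof -
  have fE: "field E" using assms(3) unfolding number_field_def by auto
  interpret gs: gal_setup G E psi
    using assms(1,2,4) fE by (simp add: gal_setup_def gal_setup_axioms_def)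
  have G0e: "G0 = gs.G0" unfolding G0_def gs.G0_def ..
  have E0e: "E0 = gs.E0" unfolding E0_def gs.E0_def ..
  note a0 = gs.artinH[OF gs.G.subgroup_self, folded E0_def]
  have P1: "galois_ext E E0"
    unfolding galois_ext_def using a0 by auto
  have P2: "G0 \<lhd> G" using gs.G0_normal unfolding G0e .
  have P3: "\<exists>h. h \<in> iso (G Mod G0) (gal_group E E0) \<and> (\<forall>s\<in>carrier G. h (G0 #> s) = psi s)"
    using gs.iso_part unfolding G0e E0e gs.GAL_def .
  have P5: "\<forall>H1 H2. subgroup H1 G \<and> G0 \<subseteq> H1 \<longrightarrow> subgroup H2 G \<and> G0 \<subseteq> H2 \<longrightarrow>
          (H1 \<subseteq> H2 \<longleftrightarrow> fixed_field E psi H2 \<subseteq> fixed_field E psi H1)"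
    unfolding G0e using gs.fixed_mono_iff by blast
  have P4: "bij_betw (fixed_field E psi) {H. subgroup H G \<and> G0 \<subseteq> H} {F. subfield F E \<and> E0 \<subseteq> F}"
    unfolding bij_betw_def
  proof (intro conjI)
    show "inj_on (fixed_field E psi) {H. subgroup H G \<and> G0 \<subseteq> H}"
    proof (rule inj_onI)
      fix H1 H2 assume "H1 \<in> {H. subgroup H G \<and> G0 \<subseteq> H}" "H2 \<in> {H. subgroup H G \<and> G0 \<subseteq> H}"
        and eq: "fixed_field E psi H1 = fixed_field E psi H2"
      then show "H1 = H2" using P5 by blast
    qed
    show "fixed_field E psi ` {H. subgroup H G \<and> G0 \<subseteq> H} = {F. subfield F E \<and> E0 \<subseteq> F}"
    proof
      show "fixed_field E psi ` {H. subgroup H G \<and> G0 \<subseteq> H} \<subseteq> {F. subfield F E \<and> E0 \<subseteq> F}"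
      proof
        fix F assume "F \<in> fixed_field E psi ` {H. subgroup H G \<and> G0 \<subseteq> H}"
        then obtain H where H: "subgroup H G" "F = fixed_field E psi H" by auto
        have "E0 \<subseteq> F" using subgroup.subset[OF H(1)] unfolding H(2) E0_def fixed_field_def by auto
        then show "F \<in> {F. subfield F E \<and> E0 \<subseteq> F}" using gs.artinH(1)[OF H(1)] H(2) by auto
      qed
      show "{F. subfield F E \<and> E0 \<subseteq> F} \<subseteq> fixed_field E psi ` {H. subgroup H G \<and> G0 \<subseteq> H}"
      proof
        fix F assume "F \<in> {F. subfield F E \<and> E0 \<subseteq> F}"
        then obtain H where "subgroup H G" "gs.G0 \<subseteq> H" "fixed_field E psi H = F"
          using gs.surj_part unfolding E0e by blast
        then show "F \<in> fixed_field E psi ` {H. subgroup H G \<and> G0 \<subseteq> H}" unfolding G0e by blast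
      qed
    qed
  qed
  show ?thesis using P1 P2 P3 P4 P5 by blast
qed


end
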